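(* Let $B$ be a Frobenius algebra over $\mathbb{Q}$ and $n\ge0$. Then the algebra $A_n(B)$ is a Frobenius algebra.
   Context: $A_n$ is the nilCoxeter algebra: the unital $\mathbb{Q}$-algebra generated by $Y_1,\dots,Y_{n-1}$ with relations $Y_i^2=0$, $Y_iY_j=Y_jY_i$ for $|i-j|>1$, $Y_iY_{i+1}Y_i=Y_{i+1}Y_iY_{i+1}$; for $w\in S_n$ with reduced expression $w=s_{i_1}\cdots s_{i_r}$, $Y_w=Y_{i_1}\cdots Y_{i_r}$, and $\{Y_w\}_{w\in S_n}$ is a basis of $A_n$. $A_n(B)$ is the semidirect product of $A_n$ and $B^{\otimes n}$: the algebra generated by the subalgebras $A_n$ and $B^{\otimes n}$, with underlying space $A_n\otimes B^{\otimes n}$, subject to $Y_w(b_1\otimes\cdots\otimes b_n)=(b_{w(1)}\otimes\cdots\otimes b_{w(n)})Y_w$ for $w\in S_n$, $b_i\in B$. A Frobenius algebra is a finite-dimensional algebra $C$ with a linear map $\mathrm{tr}:C\to\mathbb{Q}$ such that for every nonzero $y\in C$ there is $y'$ with $\mathrm{tr}(yy')\neq0$. *)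

theory Defs
  imports Complex_Main "HOL-Library.FuncSet" "HOL-Combinatorics.Permutations"
begin

text \<open>A finite-dimensional algebra over the rationals is presented by a finite basis
  index set I and structure constants m: e_i e_j = sum_k m i j k e_k.
  Elements are coefficient vectors supported on I.\<close>

definition vecs :: "'i set \<Rightarrow> ('i \<Rightarrow> rat) set" where
  "vecs I = {x. \<forall>i. i \<notin> I \<longrightarrow> x i = 0}"

definition amult :: "'i set \<Rightarrow> ('i \<Rightarrow> 'i \<Rightarrow> 'i \<Rightarrow> rat) \<Rightarrow> ('i \<Rightarrow> rat) \<Rightarrow> ('i \<Rightarrow> rat) \<Rightarrow> ('i \<Rightarrow> rat)" where
  "amult I m x y = (\<lambda>k. if k \<in> I then (\<Sum>i\<in>I. \<Sum>j\<in>I. x i * y j * m i j k) else 0)"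

definition fd_algebra :: "'i set \<Rightarrow> ('i \<Rightarrow> 'i \<Rightarrow> 'i \<Rightarrow> rat) \<Rightarrow> bool" where
  "fd_algebra I m \<longleftrightarrow> finite I \<and>
     (\<forall>x\<in>vecs I. \<forall>y\<in>vecs I. \<forall>z\<in>vecs I.
        amult I m (amult I m x y) z = amult I m x (amult I m y z)) \<and>
     (\<exists>u\<in>vecs I. \<forall>x\<in>vecs I. amult I m u x = x \<and> amult I m x u = x)"

text \<open>Frobenius algebra: a linear functional tr (written through its values t on the
  basis, tr x = sum_i x i * t i) such that for every nonzero y there is y' with tr(y y') nonzero.\<close>
definition frobenius :: "'i set \<Rightarrow> ('i \<Rightarrow> 'i \<Rightarrow> 'i \<Rightarrow> rat) \<Rightarrow> bool" where
  "frobenius I m \<longleftrightarrow> fd_algebra I m \<and>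
     (\<exists>t::'i \<Rightarrow> rat. \<forall>y\<in>vecs I. y \<noteq> (\<lambda>_. 0) \<longrightarrow>
        (\<exists>y'\<in>vecs I. (\<Sum>k\<in>I. amult I m y y' k * t k) \<noteq> 0))"

definition perm_length :: "nat \<Rightarrow> (nat \<Rightarrow> nat) \<Rightarrow> nat" where
  "perm_length n w = card {(i, j). i < j \<and> j < n \<and> w j < w i}"

text \<open>Basis of A_n(B) = A_n tensor B^{tensor n}: pairs (f, w), standing for
  (e_{f 0} \<otimes> ... \<otimes> e_{f (n-1)}) Y_w, with f a tuple of basis indices of B
  and w a permutation of {0..<n}.\<close>
definition AnB_basis :: "'i set \<Rightarrow> nat \<Rightarrow> ((nat \<Rightarrow> 'i) \<times> (nat \<Rightarrow> nat)) set" where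
  "AnB_basis I n = {(f, w). f \<in> {..<n} \<rightarrow>\<^sub>E I \<and> w permutes {..<n}}"

text \<open>Using Y_w b = (b \<circ> w) Y_w (i.e.
  Y_w (b_1 \<otimes>...\<otimes> b_n) = (b_{w(1)} \<otimes>...\<otimes> b_{w(n)}) Y_w) and
  Y_w Y_v = Y_{v \<circ> w} if the lengths add, 0 otherwise (the composition order is the one
  compatible with the commutation relation), we get
  (e_f Y_w)(e_g Y_v) = e_f e_{g \<circ> w} Y_w Y_v.\<close>
definition AnB_mult :: "'i set \<Rightarrow> ('i \<Rightarrow> 'i \<Rightarrow> 'i \<Rightarrow> rat) \<Rightarrow> nat \<Rightarrow>
    ((nat \<Rightarrow> 'i) \<times> (nat \<Rightarrow> nat)) \<Rightarrow> ((nat \<Rightarrow> 'i) \<times> (nat \<Rightarrow> nat)) \<Rightarrow>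
    ((nat \<Rightarrow> 'i) \<times> (nat \<Rightarrow> nat)) \<Rightarrow> rat" where
  "AnB_mult I m n a b c =
     (let (f, w) = a; (g, v) = b; (h, u) = c in
      if u = v \<circ> w \<and> perm_length n u = perm_length n v + perm_length n w
      then (\<Prod>k<n. m (f k) (g (w k)) (h k)) else 0)"

end

theory Submission
  imports Defs
begin

lemma swap3: "(\<Sum>p\<in>J. \<Sum>c\<in>J. \<Sum>b\<in>J. (F b c p::rat)) = (\<Sum>c\<in>J. \<Sum>b\<in>J. \<Sum>p\<in>J. F b c p)"
proof -
  have "(\<Sum>p\<in>J. \<Sum>c\<in>J. \<Sum>b\<in>J. F b c p) = (\<Sum>c\<in>J. \<Sum>p\<in>J. \<Sum>b\<in>J. F b c p)" by (rule sum.swap)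
  also have "\<dots> = (\<Sum>c\<in>J. \<Sum>b\<in>J. \<Sum>p\<in>J. F b c p)" by (rule sum.cong[OF refl], rule sum.swap)
  finally show ?thesis .
qed

lemma swap4: "(\<Sum>p\<in>J. \<Sum>c\<in>J. \<Sum>a\<in>J. \<Sum>b\<in>J. (F a b c p::rat)) = (\<Sum>a\<in>J. \<Sum>b\<in>J. \<Sum>c\<in>J. \<Sum>p\<in>J. F a b c p)"
proof -
  have "(\<Sum>p\<in>J. \<Sum>c\<in>J. \<Sum>a\<in>J. \<Sum>b\<in>J. F a b c p) = (\<Sum>p\<in>J. \<Sum>a\<in>J. \<Sum>b\<in>J. \<Sum>c\<in>J. F a b c p)"
  proof (rule sum.cong[OF refl])
    fix p
    have "(\<Sum>c\<in>J. \<Sum>a\<in>J. \<Sum>b\<in>J. F a b c p) = (\<Sum>a\<in>J. \<Sum>c\<in>J. \<Sum>b\<in>J. F a b c p)" by (rule sum.swap)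
    also have "\<dots> = (\<Sum>a\<in>J. \<Sum>b\<in>J. \<Sum>c\<in>J. F a b c p)" by (rule sum.cong[OF refl], rule sum.swap)
    finally show "(\<Sum>c\<in>J. \<Sum>a\<in>J. \<Sum>b\<in>J. F a b c p) = (\<Sum>a\<in>J. \<Sum>b\<in>J. \<Sum>c\<in>J. F a b c p)" .
  qed
  also have "\<dots> = (\<Sum>a\<in>J. \<Sum>p\<in>J. \<Sum>b\<in>J. \<Sum>c\<in>J. F a b c p)" by (rule sum.swap)
  also have "\<dots> = (\<Sum>a\<in>J. \<Sum>b\<in>J. \<Sum>p\<in>J. \<Sum>c\<in>J. F a b c p)" by (rule sum.cong[OF refl], rule sum.swap)
  also have "\<dots> = (\<Sum>a\<in>J. \<Sum>b\<in>J. \<Sum>c\<in>J. \<Sum>p\<in>J. F a b c p)" by (rule sum.cong[OF refl], rule sum.cong[OF refl], rule sum.swap)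
  finally show ?thesis .
qed

lemma amult_assoc_consts:
  assumes C: "\<And>a b c d. a\<in>J \<Longrightarrow> b\<in>J \<Longrightarrow> c\<in>J \<Longrightarrow> d\<in>J \<Longrightarrow>
     (\<Sum>p\<in>J. M a b p * M p c d) = (\<Sum>p\<in>J. M b c p * M a p d)"
  shows "amult J M (amult J M x y) z = amult J M x (amult J M y z)"
proof
  fix k
  show "amult J M (amult J M x y) z k = amult J M x (amult J M y z) k"
  proof (cases "k \<in> J")
    case False then show ?thesis by (simp add: amult_def)
  next
    case True
    have "amult J M (amult J M x y) z k = (\<Sum>p\<in>J. \<Sum>c\<in>J. (\<Sum>a\<in>J. \<Sum>b\<in>J. x a * y b * M a b p) * z c * M p c k)"
      using True by (simp add: amult_def)
    also have "\<dots> = (\<Sum>p\<in>J. \<Sum>c\<in>J. \<Sum>a\<in>J. \<Sum>b\<in>J. x a * y b * z c * (M a b p * M p c k))"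
      by (simp add: sum_distrib_left sum_distrib_right mult_ac)
    also have "\<dots> = (\<Sum>a\<in>J. \<Sum>b\<in>J. \<Sum>c\<in>J. \<Sum>p\<in>J. x a * y b * z c * (M a b p * M p c k))"
      by (rule swap4)
    also have "\<dots> = (\<Sum>a\<in>J. \<Sum>b\<in>J. \<Sum>c\<in>J. x a * y b * z c * (\<Sum>p\<in>J. M a b p * M p c k))"
      by (simp add: sum_distrib_left)
    also have "\<dots> = (\<Sum>a\<in>J. \<Sum>b\<in>J. \<Sum>c\<in>J. x a * y b * z c * (\<Sum>p\<in>J. M b c p * M a p k))"
      using C True by (intro sum.cong refl) simp
    also have "\<dots> = (\<Sum>a\<in>J. \<Sum>b\<in>J. \<Sum>c\<in>J. \<Sum>p\<in>J. x a * y b * z c * (M b c p * M a p k))"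
      by (simp add: sum_distrib_left)
    also have "\<dots> = (\<Sum>a\<in>J. \<Sum>p\<in>J. \<Sum>b\<in>J. \<Sum>c\<in>J. x a * y b * z c * (M b c p * M a p k))"
      by (rule sum.cong[OF refl], rule swap3[symmetric])
    also have "\<dots> = (\<Sum>a\<in>J. \<Sum>p\<in>J. x a * (\<Sum>b\<in>J. \<Sum>c\<in>J. y b * z c * M b c p) * M a p k)"
      by (simp add: sum_distrib_left sum_distrib_right mult_ac)
    also have "\<dots> = amult J M x (amult J M y z) k"
      using True by (simp add: amult_def)
    finally show ?thesis .
  qed
qed

definition dlt :: "'a \<Rightarrow> 'a \<Rightarrow> rat" where "dlt a = (\<lambda>i. if i = a then 1 else 0)"

lemma mult_if10[simp]: "(x::rat) * (if P then 1 else 0) = (if P then x else 0)"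
  "(if P then 1 else 0) * (x::rat) = (if P then x else 0)" by simp_all

lemma sum_if_const[simp]: "(\<Sum>j\<in>J. if P then f j else (0::rat)) = (if P then sum f J else 0)"
  by simp

lemma dlt_vecs: "a \<in> J \<Longrightarrow> dlt a \<in> vecs J"
  by (auto simp: dlt_def vecs_def)

lemma amult_dlt_left: "finite J \<Longrightarrow> a \<in> J \<Longrightarrow> k \<in> J \<Longrightarrow> amult J M (dlt a) y k = (\<Sum>j\<in>J. y j * M a j k)"
  by (simp add: amult_def dlt_def if_distrib[where f="\<lambda>x. x * _"] cong: if_cong)

lemma amult_dlt_right: "finite J \<Longrightarrow> a \<in> J \<Longrightarrow> k \<in> J \<Longrightarrow> amult J M x (dlt a) k = (\<Sum>i\<in>J. x i * M i a k)"
  by (simp add: amult_def dlt_def if_distrib[where f="\<lambda>x. x * _"] cong: if_cong)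

lemma consts_from_assoc:
  assumes fin: "finite J"
    and A: "\<forall>x\<in>vecs J. \<forall>y\<in>vecs J. \<forall>z\<in>vecs J. amult J M (amult J M x y) z = amult J M x (amult J M y z)"
    and abcd: "a\<in>J" "b\<in>J" "c\<in>J" "d\<in>J"
  shows "(\<Sum>p\<in>J. M a b p * M p c d) = (\<Sum>p\<in>J. M b c p * M a p d)"
proof -
  have "amult J M (amult J M (dlt a) (dlt b)) (dlt c) d = amult J M (dlt a) (amult J M (dlt b) (dlt c)) d"
    using A abcd by (simp add: dlt_vecs)
  moreover have "amult J M (amult J M (dlt a) (dlt b)) (dlt c) d = (\<Sum>p\<in>J. M a b p * M p c d)"
    using fin abcd by (simp add: amult_dlt_right amult_dlt_left) (simp add: dlt_def)
  moreover have "amult J M (dlt a) (amult J M (dlt b) (dlt c)) d = (\<Sum>p\<in>J. M b c p * M a p d)"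
    using fin abcd by (simp add: amult_dlt_right amult_dlt_left) (simp add: dlt_def)
  ultimately show ?thesis by simp
qed

lemma unit_consts:
  assumes fin: "finite J" and u: "\<forall>x\<in>vecs J. amult J M u x = x \<and> amult J M x u = x"
    and jk: "j \<in> J" "k \<in> J"
  shows "(\<Sum>i\<in>J. u i * M i j k) = dlt j k" "(\<Sum>i\<in>J. u i * M j i k) = dlt j k"
proof -
  have "amult J M u (dlt j) k = dlt j k" using u jk by (simp add: dlt_vecs)
  then show "(\<Sum>i\<in>J. u i * M i j k) = dlt j k"
    using fin jk by (simp add: amult_dlt_right)
  have "amult J M (dlt j) u k = dlt j k" using u jk by (simp add: dlt_vecs)
  then show "(\<Sum>i\<in>J. u i * M j i k) = dlt j k"
    using fin jk by (simp add: amult_dlt_left mult.commute)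
qed

lemma unit_from_consts:
  assumes fin: "finite J"
    and L: "\<And>j k. j \<in> J \<Longrightarrow> k \<in> J \<Longrightarrow> (\<Sum>i\<in>J. U i * M i j k) = dlt j k"
    and R: "\<And>j k. j \<in> J \<Longrightarrow> k \<in> J \<Longrightarrow> (\<Sum>i\<in>J. U i * M j i k) = dlt j k"
    and x: "x \<in> vecs J"
  shows "amult J M U x = x" "amult J M x U = x"
proof -
  show "amult J M U x = x"
  proof
    fix k show "amult J M U x k = x k"
    proof (cases "k \<in> J")
      case False then show ?thesis using x by (simp add: amult_def vecs_def)
    next
      case True
      have "amult J M U x k = (\<Sum>j\<in>J. x j * (\<Sum>i\<in>J. U i * M i j k))"
        using True by (simp add: amult_def sum_distrib_left mult_ac) (rule sum.swap)
      also have "\<dots> = (\<Sum>j\<in>J. x j * dlt j k)" using True L by simp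
      also have "\<dots> = x k" using True fin by (simp add: dlt_def)
      finally show ?thesis .
    qed
  qed
  show "amult J M x U = x"
  proof
    fix k show "amult J M x U k = x k"
    proof (cases "k \<in> J")
      case False then show ?thesis using x by (simp add: amult_def vecs_def)
    next
      case True
      have "amult J M x U k = (\<Sum>j\<in>J. x j * (\<Sum>i\<in>J. U i * M j i k))"
        using True by (simp add: amult_def sum_distrib_left mult_ac)
      also have "\<dots> = (\<Sum>j\<in>J. x j * dlt j k)" using True R by simp
      also have "\<dots> = x k" using True fin by (simp add: dlt_def)
      finally show ?thesis .
    qed
  qed
qed

lemma trace_form:
  "(\<Sum>k\<in>J. amult J M a b k * t k) = (\<Sum>i\<in>J. \<Sum>j\<in>J. a i * b j * (\<Sum>k\<in>J. M i j k * t k))"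
proof -
  have "(\<Sum>k\<in>J. amult J M a b k * t k) = (\<Sum>k\<in>J. \<Sum>i\<in>J. \<Sum>j\<in>J. a i * b j * M i j k * t k)"
  proof (rule sum.cong[OF refl])
    fix k assume "k \<in> J"
    then have "amult J M a b k * t k = (\<Sum>i\<in>J. \<Sum>j\<in>J. a i * b j * M i j k) * t k" by (simp add: amult_def)
    also have "\<dots> = (\<Sum>i\<in>J. \<Sum>j\<in>J. a i * b j * M i j k * t k)" by (simp add: sum_distrib_right)
    finally show "amult J M a b k * t k = (\<Sum>i\<in>J. \<Sum>j\<in>J. a i * b j * M i j k * t k)" .
  qed
  also have "\<dots> = (\<Sum>i\<in>J. \<Sum>j\<in>J. \<Sum>k\<in>J. a i * b j * M i j k * t k)"
    by (rule swap3)
  also have "\<dots> = (\<Sum>i\<in>J. \<Sum>j\<in>J. a i * b j * (\<Sum>k\<in>J. M i j k * t k))"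
    by (simp add: sum_distrib_left mult.assoc)
  finally show ?thesis .
qed


definition invs :: "nat \<Rightarrow> (nat \<Rightarrow> nat) \<Rightarrow> (nat \<times> nat) set" where
  "invs n w = {(i, j). i < j \<and> j < n \<and> w j < w i}"
definition pairs :: "nat \<Rightarrow> (nat \<times> nat) set" where
  "pairs n = {(i, j). i < j \<and> j < n}"

lemma finite_pairs: "finite (pairs n)"
  by (rule finite_subset[of _ "{..<n} \<times> {..<n}"]) (auto simp: pairs_def)

lemma invs_sub: "invs n w \<subseteq> pairs n" by (auto simp: invs_def pairs_def)

lemma finite_invs: "finite (invs n w)"
  using finite_pairs invs_sub by (rule finite_subset[rotated])

lemma pl_invs: "perm_length n w = card (invs n w)"
  unfolding perm_length_def invs_def by (rule refl)

lemma pl_le: "perm_length n w \<le> card (pairs n)"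
  by (simp add: pl_invs card_mono finite_pairs invs_sub)

lemma pl_id: "perm_length n id = 0"
proof -
  have "{(i, j). i < j \<and> j < n \<and> id j < id (i::nat)} = {}" by auto
  then show ?thesis unfolding perm_length_def by (simp only: card.empty)
qed

lemma perm_lt: "p permutes {..<n} \<Longrightarrow> j < n \<Longrightarrow> p j < n"
  using permutes_in_image[of p "{..<n}" j] by simp

lemma perm_eq_iff: "p permutes S \<Longrightarrow> p i = p j \<longleftrightarrow> i = j"
  by (rule inj_eq[OF permutes_inj])

lemma pl_subadd:
  assumes a: "a permutes {..<n}" and b: "b permutes {..<n}"
  shows "perm_length n (a \<circ> b) \<le> perm_length n a + perm_length n b"
proof -
  let ?X = "{(i, j). i < j \<and> j < n \<and> b i < b j \<and> a (b j) < a (b i)}"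
  have sub: "invs n (a \<circ> b) \<subseteq> invs n b \<union> ?X"
  proof
    fix p assume "p \<in> invs n (a \<circ> b)"
    then obtain i j where p: "p = (i, j)" "i < j" "j < n" "a (b j) < a (b i)" by (auto simp: invs_def)
    have "b i \<noteq> b j" using p perm_eq_iff[OF b] by simp
    then show "p \<in> invs n b \<union> ?X" using p by (auto simp: invs_def)
  qed
  have fX: "finite ?X" by (rule finite_subset[OF _ finite_pairs]) (auto simp: pairs_def)
  have "card ?X \<le> card (invs n a)"
  proof (rule card_inj_on_le[where f="\<lambda>(i, j). (b i, b j)"])
    show "inj_on (\<lambda>(i, j). (b i, b j)) ?X"
      by (auto simp: inj_on_def perm_eq_iff[OF b])
    show "(\<lambda>(i, j). (b i, b j)) ` ?X \<subseteq> invs n a"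
      using perm_lt[OF b] by (auto simp: invs_def)
    show "finite (invs n a)" by (rule finite_invs)
  qed
  moreover have "card (invs n (a \<circ> b)) \<le> card (invs n b \<union> ?X)"
    by (rule card_mono[OF finite_UnI[OF finite_invs fX] sub])
  moreover have "card (invs n b \<union> ?X) \<le> card (invs n b) + card ?X" by (rule card_Un_le)
  ultimately show ?thesis by (simp add: pl_invs)
qed

definition w0 :: "nat \<Rightarrow> nat \<Rightarrow> nat" where "w0 n = (\<lambda>k. if k < n then n - 1 - k else k)"

lemma w0_permutes: "w0 n permutes {..<n}"
proof -
  have "bij_betw (w0 n) {..<n} {..<n}"
    by (rule bij_betw_byWitness[where f'="w0 n"]) (auto simp: w0_def)
  then show ?thesis by (rule bij_imp_permutes) (simp add: w0_def)
qed

lemma pl_w0_comp: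
  assumes x: "x permutes {..<n}"
  shows "perm_length n (w0 n \<circ> x) + perm_length n x = card (pairs n)"
proof -
  have e: "invs n (w0 n \<circ> x) = {(i, j). i < j \<and> j < n \<and> x i < x j}"
  proof -
    have "\<And>i j. i < j \<Longrightarrow> j < n \<Longrightarrow> w0 n (x j) < w0 n (x i) \<longleftrightarrow> x i < x j"
    proof -
      fix i j assume "i < j" "j < n"
      then have "x i < n" "x j < n" using perm_lt[OF x] by auto
      then show "w0 n (x j) < w0 n (x i) \<longleftrightarrow> x i < x j" by (auto simp: w0_def)
    qed
    then show ?thesis unfolding invs_def by auto
  qed
  have "pairs n = invs n (w0 n \<circ> x) \<union> invs n x"
  proof -
    show ?thesis unfolding e unfolding invs_def pairs_def
      using perm_eq_iff[OF x] by (auto simp: not_less_iff_gr_or_eq)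
  qed
  moreover have "invs n (w0 n \<circ> x) \<inter> invs n x = {}" unfolding e unfolding invs_def by auto
  ultimately have "card (pairs n) = card (invs n (w0 n \<circ> x)) + card (invs n x)"
    using card_Un_disjoint[OF finite_invs finite_invs] by metis
  then show ?thesis unfolding pl_invs by (rule sym)
qed

lemma pl_inv_le:
  assumes w: "w permutes {..<n}"
  shows "perm_length n (inv w) \<le> perm_length n w"
  unfolding pl_invs
proof (rule card_inj_on_le[where f="\<lambda>(i, j). (inv w j, inv w i)"])
  show "inj_on (\<lambda>(i, j). (inv w j, inv w i)) (invs n (inv w))"
    by (auto simp: inj_on_def perm_eq_iff[OF permutes_inv[OF w]])
  show "(\<lambda>(i, j). (inv w j, inv w i)) ` invs n (inv w) \<subseteq> invs n w"
    using perm_lt[OF permutes_inv[OF w]] permutes_inverses[OF w] by (auto simp: invs_def)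
  show "finite (invs n w)" by (rule finite_invs)
qed

lemma pl_inv:
  assumes w: "w permutes {..<n}"
  shows "perm_length n (inv w) = perm_length n w"
proof -
  have "perm_length n (inv (inv w)) \<le> perm_length n (inv w)" by (rule pl_inv_le[OF permutes_inv[OF w]])
  then have "perm_length n w \<le> perm_length n (inv w)" by (simp only: permutes_inv_inv[OF w])
  then show ?thesis using pl_inv_le[OF w] by linarith
qed

lemma pl_w0: "perm_length n (w0 n) = card (pairs n)"
  using pl_w0_comp[OF permutes_id[of "{..<n}"]] by (simp add: pl_id)



lemma sum_PiE_insert:
  assumes "x \<notin> K"
  shows "(\<Sum>f\<in>PiE (insert x K) (\<lambda>_. I). F f) = (\<Sum>i\<in>I. \<Sum>g\<in>PiE K (\<lambda>_. I). (F (g(x := i)) :: rat))"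
proof -
  have "(\<Sum>f\<in>PiE (insert x K) (\<lambda>_. I). F f) = (\<Sum>(i, g)\<in>I \<times> PiE K (\<lambda>_. I). F (g(x := i)))"
    using assms
    by (intro sum.reindex_bij_witness[of _ "\<lambda>(y,g). g(x := y)" "\<lambda>g. (g x, g(x := undefined))"])
       (auto simp: PiE_def extensional_def)
  also have "\<dots> = (\<Sum>i\<in>I. \<Sum>g\<in>PiE K (\<lambda>_. I). F (g(x := i)))"
    by (rule sum.cartesian_product[symmetric])
  finally show ?thesis .
qed

lemma tensor_nondeg:
  fixes beta :: "'i \<Rightarrow> 'i \<Rightarrow> rat" and K :: "nat set"
  assumes finI: "finite I"
    and nd: "\<And>a. a \<in> vecs I \<Longrightarrow> a \<noteq> (\<lambda>_. 0) \<Longrightarrow> \<exists>b\<in>vecs I. (\<Sum>i\<in>I. \<Sum>j\<in>I. a i * b j * beta i j) \<noteq> 0"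
    and finK: "finite K"
  shows "f0 \<in> PiE K (\<lambda>_. I) \<Longrightarrow> Y f0 \<noteq> 0 \<Longrightarrow>
    \<exists>C. (\<Sum>f\<in>PiE K (\<lambda>_. I). \<Sum>g\<in>PiE K (\<lambda>_. I). Y f * C g * (\<Prod>k\<in>K. beta (f k) (g k))) \<noteq> 0"
  using finK
proof (induction K arbitrary: Y f0 rule: finite_induct)
  case empty
  then show ?case by (intro exI[of _ "\<lambda>_. 1"]) simp
next
  case (insert x K)
  let ?P = "PiE K (\<lambda>_. I)"
  let ?Q = "PiE (insert x K) (\<lambda>_. I)"
  define Z where "Z i g = Y (g(x := i))" for i g
  define g0 where "g0 = f0(x := undefined)"
  have g0P: "g0 \<in> ?P" using insert.prems(1) insert.hyps(2) unfolding g0_def by (auto simp: PiE_def extensional_def)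
  have f0x: "f0 x \<in> I" using insert.prems(1) by auto
  have "g0(x := f0 x) = f0" unfolding g0_def by simp
  then have "Z (f0 x) g0 \<noteq> 0" using insert.prems(2) unfolding Z_def by simp
  then obtain C' where C': "(\<Sum>g\<in>?P. \<Sum>g'\<in>?P. Z (f0 x) g * C' g' * (\<Prod>k\<in>K. beta (g k) (g' k))) \<noteq> 0"
    using insert.IH[OF g0P] by blast
  define a where "a i = (if i \<in> I then (\<Sum>g\<in>?P. \<Sum>g'\<in>?P. Z i g * C' g' * (\<Prod>k\<in>K. beta (g k) (g' k))) else 0)" for i
  have av: "a \<in> vecs I" by (auto simp: a_def vecs_def)
  have "a (f0 x) \<noteq> 0" using C' f0x by (simp add: a_def)
  then have "a \<noteq> (\<lambda>_. 0)" by (metis)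
  then obtain b where bv: "b \<in> vecs I" and b: "(\<Sum>i\<in>I. \<Sum>j\<in>I. a i * b j * beta i j) \<noteq> 0"
    using nd[OF av] by blast
  define C where "C h = C' (h(x := undefined)) * b (h x)" for h
  have Cg: "C (g'(x := j)) = C' g' * b j" if "g' \<in> ?P" for g' j
  proof -
    have "g' x = undefined" using that insert.hyps(2) by (auto simp: PiE_def extensional_def)
    then have "(g'(x := j))(x := undefined) = g'" by auto
    then show ?thesis by (simp add: C_def)
  qed
  have Pr: "(\<Prod>k\<in>insert x K. beta ((g(x := i)) k) ((g'(x := j)) k)) = beta i j * (\<Prod>k\<in>K. beta (g k) (g' k))" for g g' i j
  proof -
    have "(\<Prod>k\<in>K. beta ((g(x := i)) k) ((g'(x := j)) k)) = (\<Prod>k\<in>K. beta (g k) (g' k))"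
      using insert.hyps(2) by (intro prod.cong refl) auto
    then show ?thesis using insert.hyps by simp
  qed
  have "(\<Sum>f\<in>?Q. \<Sum>h\<in>?Q. Y f * C h * (\<Prod>k\<in>insert x K. beta (f k) (h k)))
      = (\<Sum>i\<in>I. \<Sum>g\<in>?P. \<Sum>j\<in>I. \<Sum>g'\<in>?P. Y (g(x := i)) * C (g'(x := j)) * (\<Prod>k\<in>insert x K. beta ((g(x := i)) k) ((g'(x := j)) k)))"
    using insert.hyps(2) by (simp add: sum_PiE_insert)
  also have "\<dots> = (\<Sum>i\<in>I. \<Sum>g\<in>?P. \<Sum>j\<in>I. \<Sum>g'\<in>?P. Z i g * (C' g' * b j) * (beta i j * (\<Prod>k\<in>K. beta (g k) (g' k))))"
    by (intro sum.cong refl) (simp only: Cg Pr Z_def)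
  also have "\<dots> = (\<Sum>i\<in>I. \<Sum>j\<in>I. \<Sum>g\<in>?P. \<Sum>g'\<in>?P. Z i g * (C' g' * b j) * (beta i j * (\<Prod>k\<in>K. beta (g k) (g' k))))"
    by (intro sum.cong refl) (rule sum.swap)
  also have "\<dots> = (\<Sum>i\<in>I. \<Sum>j\<in>I. a i * b j * beta i j)"
    by (intro sum.cong refl) (simp add: a_def sum_distrib_right sum_distrib_left mult_ac)
  finally show ?case using b by (intro exI[of _ C]) simp
qed



lemma prod_perm_arg:
  assumes s: "s permutes {..<n}"
  shows "(\<Prod>k<n. H k (f (s k))) = (\<Prod>k<n. H (inv s k) (f k) :: rat)"
proof -
  have "(\<Prod>k<n. H (inv s k) (f k)) = (\<Prod>k<n. H (inv s (s k)) (f (s k)))"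
    using prod.permute[OF s, of "\<lambda>k. H (inv s k) (f k)"] by (simp add: comp_def)
  also have "\<dots> = (\<Prod>k<n. H k (f (s k)))" by (simp add: permutes_inverses[OF s])
  finally show ?thesis by simp
qed

lemma basis_eq: "AnB_basis I n = ({..<n} \<rightarrow>\<^sub>E I) \<times> {w. w permutes {..<n}}"
  by (auto simp: AnB_basis_def)

lemma finite_basis: "finite I \<Longrightarrow> finite (AnB_basis I n)"
  unfolding basis_eq by (intro finite_cartesian_product finite_PiE finite_permutations) auto

lemma sum_basis: "(\<Sum>a\<in>AnB_basis I n. F a) = (\<Sum>f\<in>{..<n} \<rightarrow>\<^sub>E I. \<Sum>w\<in>{w. w permutes {..<n}}. (F (f, w) :: rat))"
  unfolding basis_eq by (subst sum.cartesian_product) (simp add: case_prod_unfold)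

lemma mult_eq: "AnB_mult I m n (f, w) (g, v) (h, u) =
   (if u = v \<circ> w \<and> perm_length n u = perm_length n v + perm_length n w
    then (\<Prod>k<n. m (f k) (g (w k)) (h k)) else 0)"
  by (simp add: AnB_mult_def)

lemma sum_delta_cond:
  assumes "finite S" "s0 \<in> S"
  shows "(\<Sum>s\<in>S. (if s = s0 \<and> Q s then X s else 0) * (Y s :: rat)) = (if Q s0 then X s0 * Y s0 else 0)"
proof -
  have "(\<Sum>s\<in>S. (if s = s0 \<and> Q s then X s else 0) * Y s) = (\<Sum>s\<in>S. if s = s0 then (if Q s0 then X s0 * Y s0 else 0) else 0)"
    by (intro sum.cong refl) auto
  also have "\<dots> = (if Q s0 then X s0 * Y s0 else 0)" using assms by simp
  finally show ?thesis .
qed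

lemma sum_delta_cond2:
  assumes "finite S" "s0 \<in> S"
  shows "(\<Sum>s\<in>S. (Y s :: rat) * (if s = s0 \<and> Q s then X s else 0)) = (if Q s0 then Y s0 * X s0 else 0)"
  using sum_delta_cond[OF assms, of Q X Y] by (simp add: mult.commute)

lemma len_assoc:
  assumes that: "z = u \<circ> v \<circ> w" and u: "u permutes {..<n}" and v: "v permutes {..<n}" and w: "w permutes {..<n}"
  shows "(perm_length n z = perm_length n u + perm_length n (v \<circ> w) \<and> perm_length n (v \<circ> w) = perm_length n v + perm_length n w)
     \<longleftrightarrow> (perm_length n z = perm_length n (u \<circ> v) + perm_length n w \<and> perm_length n (u \<circ> v) = perm_length n u + perm_length n v)"
proof -
  have 1: "perm_length n (u \<circ> (v \<circ> w)) \<le> perm_length n u + perm_length n (v \<circ> w)"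
    by (rule pl_subadd[OF u permutes_compose[OF w v]])
  have 2: "perm_length n (v \<circ> w) \<le> perm_length n v + perm_length n w" by (rule pl_subadd[OF v w])
  have 3: "perm_length n ((u \<circ> v) \<circ> w) \<le> perm_length n (u \<circ> v) + perm_length n w"
    by (rule pl_subadd[OF permutes_compose[OF v u] w])
  have 4: "perm_length n (u \<circ> v) \<le> perm_length n u + perm_length n v" by (rule pl_subadd[OF u v])
  have zz: "u \<circ> (v \<circ> w) = z" "(u \<circ> v) \<circ> w = z" using that by (simp_all add: o_assoc)
  show ?thesis using 1 2 3 4 unfolding zz by linarith
qed

lemma sum_if_if: "(\<Sum>q\<in>P. if A then X q * (if B then Y q else 0) else 0) = (if A \<and> B then (\<Sum>q\<in>P. X q * Y q) else (0::rat))"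
  by (cases A; cases B) simp_all

lemma AnB_assoc_consts:
  assumes finI: "finite I"
    and BA: "\<And>a b c d. a\<in>I \<Longrightarrow> b\<in>I \<Longrightarrow> c\<in>I \<Longrightarrow> d\<in>I \<Longrightarrow>
       (\<Sum>p\<in>I. m a b p * m p c d) = (\<Sum>p\<in>I. m b c p * m a p d)"
    and f: "f \<in> {..<n} \<rightarrow>\<^sub>E I" and g: "g \<in> {..<n} \<rightarrow>\<^sub>E I" and h: "h \<in> {..<n} \<rightarrow>\<^sub>E I" and e: "e \<in> {..<n} \<rightarrow>\<^sub>E I"
    and w: "w permutes {..<n}" and v: "v permutes {..<n}" and u: "u permutes {..<n}"
  shows "(\<Sum>p\<in>AnB_basis I n. AnB_mult I m n (f, w) (g, v) p * AnB_mult I m n p (h, u) (e, z))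
       = (\<Sum>p\<in>AnB_basis I n. AnB_mult I m n (g, v) (h, u) p * AnB_mult I m n (f, w) p (e, z))"
proof -
  let ?P = "{..<n} \<rightarrow>\<^sub>E I"
  let ?S = "{w. w permutes {..<n}}"
  let ?L = "perm_length n"
  define R where "R = (\<Prod>k<n. \<Sum>i\<in>I. m (f k) (g (w k)) i * m i (h (v (w k))) (e k))"
  have finS: "finite ?S" by (rule finite_permutations) simp
  have vw: "v \<circ> w \<in> ?S" using permutes_compose[OF w v] by simp
  have uv: "u \<circ> v \<in> ?S" using permutes_compose[OF v u] by simp
  have "(\<Sum>p\<in>AnB_basis I n. AnB_mult I m n (f, w) (g, v) p * AnB_mult I m n p (h, u) (e, z))
     = (\<Sum>q\<in>?P. \<Sum>s\<in>?S. (if s = v \<circ> w \<and> ?L s = ?L v + ?L w then (\<Prod>k<n. m (f k) (g (w k)) (q k)) else 0)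
          * (if z = u \<circ> s \<and> ?L z = ?L u + ?L s then (\<Prod>k<n. m (q k) (h (s k)) (e k)) else 0))"
    by (simp only: sum_basis mult_eq)
  also have "\<dots> = (\<Sum>q\<in>?P. if ?L (v \<circ> w) = ?L v + ?L w then (\<Prod>k<n. m (f k) (g (w k)) (q k))
          * (if z = u \<circ> (v \<circ> w) \<and> ?L z = ?L u + ?L (v \<circ> w) then (\<Prod>k<n. m (q k) (h (v (w k))) (e k)) else 0) else 0)"
    by (intro sum.cong refl, subst sum_delta_cond[OF finS vw], simp only: comp_apply)
  also have "\<dots> = (if ?L (v \<circ> w) = ?L v + ?L w \<and> (z = u \<circ> (v \<circ> w) \<and> ?L z = ?L u + ?L (v \<circ> w))
       then (\<Sum>q\<in>?P. (\<Prod>k<n. m (f k) (g (w k)) (q k)) * (\<Prod>k<n. m (q k) (h (v (w k))) (e k))) else 0)"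
    by (rule sum_if_if)
  also have "(\<Sum>q\<in>?P. (\<Prod>k<n. m (f k) (g (w k)) (q k)) * (\<Prod>k<n. m (q k) (h (v (w k))) (e k))) = R"
    unfolding R_def using finI
    by (subst prod_sum_PiE) (simp_all add: prod.distrib)
  finally have LHS: "(\<Sum>p\<in>AnB_basis I n. AnB_mult I m n (f, w) (g, v) p * AnB_mult I m n p (h, u) (e, z))
     = (if ?L (v \<circ> w) = ?L v + ?L w \<and> (z = u \<circ> (v \<circ> w) \<and> ?L z = ?L u + ?L (v \<circ> w)) then R else 0)" .

  have "(\<Sum>p\<in>AnB_basis I n. AnB_mult I m n (g, v) (h, u) p * AnB_mult I m n (f, w) p (e, z))
     = (\<Sum>q\<in>?P. \<Sum>s\<in>?S. (if s = u \<circ> v \<and> ?L s = ?L u + ?L v then (\<Prod>k<n. m (g k) (h (v k)) (q k)) else 0)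
          * (if z = s \<circ> w \<and> ?L z = ?L s + ?L w then (\<Prod>k<n. m (f k) (q (w k)) (e k)) else 0))"
    by (simp only: sum_basis mult_eq)
  also have "\<dots> = (\<Sum>q\<in>?P. if ?L (u \<circ> v) = ?L u + ?L v then (\<Prod>k<n. m (g k) (h (v k)) (q k))
          * (if z = u \<circ> v \<circ> w \<and> ?L z = ?L (u \<circ> v) + ?L w then (\<Prod>k<n. m (f k) (q (w k)) (e k)) else 0) else 0)"
    by (intro sum.cong refl, subst sum_delta_cond[OF finS uv], simp only: comp_apply)
  also have "\<dots> = (if ?L (u \<circ> v) = ?L u + ?L v \<and> (z = u \<circ> v \<circ> w \<and> ?L z = ?L (u \<circ> v) + ?L w)
       then (\<Sum>q\<in>?P. (\<Prod>k<n. m (g k) (h (v k)) (q k)) * (\<Prod>k<n. m (f k) (q (w k)) (e k))) else 0)"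
    by (rule sum_if_if)
  also have "(\<Sum>q\<in>?P. (\<Prod>k<n. m (g k) (h (v k)) (q k)) * (\<Prod>k<n. m (f k) (q (w k)) (e k))) = R"
  proof -
    have "(\<Sum>q\<in>?P. (\<Prod>k<n. m (g k) (h (v k)) (q k)) * (\<Prod>k<n. m (f k) (q (w k)) (e k)))
        = (\<Sum>q\<in>?P. (\<Prod>k<n. m (g k) (h (v k)) (q k)) * (\<Prod>k<n. m (f (inv w k)) (q k) (e (inv w k))))"
      by (intro sum.cong refl) (simp only: prod_perm_arg[OF w, of "\<lambda>k x. m (f k) x (e k)"])
    also have "\<dots> = (\<Prod>k<n. \<Sum>i\<in>I. m (g k) (h (v k)) i * m (f (inv w k)) i (e (inv w k)))"
      using finI by (subst prod_sum_PiE) (simp_all add: prod.distrib)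
    also have "\<dots> = (\<Prod>k<n. \<Sum>i\<in>I. m (f (inv w k)) (g k) i * m i (h (v k)) (e (inv w k)))"
    proof (intro prod.cong refl)
      fix k assume k: "k \<in> {..<n}"
      have "inv w k < n" using k perm_lt[OF permutes_inv[OF w]] by simp
      moreover have "v k < n" using k perm_lt[OF v] by simp
      ultimately show "(\<Sum>i\<in>I. m (g k) (h (v k)) i * m (f (inv w k)) i (e (inv w k)))
         = (\<Sum>i\<in>I. m (f (inv w k)) (g k) i * m i (h (v k)) (e (inv w k)))"
        using k f g h e by (intro BA[symmetric]) auto
    qed
    also have "\<dots> = R"
      unfolding R_def using prod.permute[OF w, of "\<lambda>k. \<Sum>i\<in>I. m (f (inv w k)) (g k) i * m i (h (v k)) (e (inv w k))"]
      by (simp add: comp_def permutes_inverses[OF w])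
    finally show ?thesis .
  qed
  finally have RHS: "(\<Sum>p\<in>AnB_basis I n. AnB_mult I m n (g, v) (h, u) p * AnB_mult I m n (f, w) p (e, z))
     = (if ?L (u \<circ> v) = ?L u + ?L v \<and> (z = u \<circ> v \<circ> w \<and> ?L z = ?L (u \<circ> v) + ?L w) then R else 0)" .
  have oa: "u \<circ> (v \<circ> w) = u \<circ> v \<circ> w" by (simp add: o_assoc)
  have c: "(?L (v \<circ> w) = ?L v + ?L w \<and> (z = u \<circ> (v \<circ> w) \<and> ?L z = ?L u + ?L (v \<circ> w)))
     = (?L (u \<circ> v) = ?L u + ?L v \<and> (z = u \<circ> v \<circ> w \<and> ?L z = ?L (u \<circ> v) + ?L w))"
  proof (cases "z = u \<circ> v \<circ> w")
    case True
    then show ?thesis using len_assoc[OF True u v w] oa by auto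
  next
    case False
    then show ?thesis using oa by auto
  qed
  show ?thesis by (simp only: LHS RHS c)
qed


lemma prod_dlt:
  fixes n :: nat
  assumes g: "g \<in> {..<n} \<rightarrow>\<^sub>E I" and h: "h \<in> {..<n} \<rightarrow>\<^sub>E I"
  shows "(\<Prod>k<n. dlt (g k) (h k)) = (if g = h then 1 else 0)"
proof (cases "g = h")
  case True then show ?thesis by (simp add: dlt_def)
next
  case False
  then obtain k where "k < n" "g k \<noteq> h k" using PiE_ext[OF g h] by auto
  then have "dlt (g k) (h k) = 0" by (simp add: dlt_def)
  then have "(\<Prod>k<n. dlt (g k) (h k)) = 0" using \<open>k < n\<close> by (intro prod_zero) auto
  then show ?thesis using False by simp
qed

definition unitAnB :: "'i set \<Rightarrow> nat \<Rightarrow> ('i \<Rightarrow> rat) \<Rightarrow> (nat \<Rightarrow> 'i) \<times> (nat \<Rightarrow> nat) \<Rightarrow> rat" where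
  "unitAnB I n uB p = (if p \<in> AnB_basis I n \<and> snd p = id then (\<Prod>k<n. uB (fst p k)) else 0)"

lemma unitAnB_vecs: "unitAnB I n uB \<in> vecs (AnB_basis I n)"
  by (auto simp: vecs_def unitAnB_def)

lemma sum_unitAnB:
  assumes finI: "finite I"
  shows "(\<Sum>p\<in>AnB_basis I n. unitAnB I n uB p * F p) = (\<Sum>f\<in>{..<n} \<rightarrow>\<^sub>E I. (\<Prod>k<n. uB (f k)) * F (f, id))"
proof -
  have idS: "id \<in> {w. w permutes {..<n}}" by simp
  have finS: "finite {w. w permutes {..<n}}" by (rule finite_permutations) simp
  have "(\<Sum>p\<in>AnB_basis I n. unitAnB I n uB p * F p) = (\<Sum>f\<in>{..<n} \<rightarrow>\<^sub>E I. \<Sum>s\<in>{w. w permutes {..<n}}. unitAnB I n uB (f, s) * F (f, s))"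
    by (rule sum_basis)
  also have "\<dots> = (\<Sum>f\<in>{..<n} \<rightarrow>\<^sub>E I. \<Sum>s\<in>{w. w permutes {..<n}}. (if s = id \<and> True then (\<Prod>k<n. uB (f k)) else 0) * F (f, s))"
    by (intro sum.cong refl) (auto simp: unitAnB_def AnB_basis_def)
  also have "\<dots> = (\<Sum>f\<in>{..<n} \<rightarrow>\<^sub>E I. (\<Prod>k<n. uB (f k)) * F (f, id))"
    by (intro sum.cong refl, subst sum_delta_cond[OF finS idS]) simp
  finally show ?thesis .
qed

lemma AnB_unit_consts:
  assumes finI: "finite I"
    and UL: "\<And>j k. j \<in> I \<Longrightarrow> k \<in> I \<Longrightarrow> (\<Sum>i\<in>I. uB i * m i j k) = dlt j k"
    and UR: "\<And>j k. j \<in> I \<Longrightarrow> k \<in> I \<Longrightarrow> (\<Sum>i\<in>I. uB i * m j i k) = dlt j k"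
    and g: "g \<in> {..<n} \<rightarrow>\<^sub>E I" and h: "h \<in> {..<n} \<rightarrow>\<^sub>E I"
    and v: "v permutes {..<n}"
  shows "(\<Sum>p\<in>AnB_basis I n. unitAnB I n uB p * AnB_mult I m n p (g, v) (h, z)) = dlt (g, v) (h, z)"
    and "(\<Sum>p\<in>AnB_basis I n. unitAnB I n uB p * AnB_mult I m n (g, v) p (h, z)) = dlt (g, v) (h, z)"
proof -
  have "(\<Sum>p\<in>AnB_basis I n. unitAnB I n uB p * AnB_mult I m n p (g, v) (h, z))
      = (\<Sum>f\<in>{..<n} \<rightarrow>\<^sub>E I. (\<Prod>k<n. uB (f k)) * AnB_mult I m n (f, id) (g, v) (h, z))"
    by (rule sum_unitAnB[OF finI])
  also have "\<dots> = (\<Sum>f\<in>{..<n} \<rightarrow>\<^sub>E I. if z = v then (\<Prod>k<n. uB (f k)) * (\<Prod>k<n. m (f k) (g k) (h k)) else 0)"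
    by (intro sum.cong refl) (simp add: mult_eq pl_id)
  also have "\<dots> = (if z = v then (\<Prod>k<n. \<Sum>i\<in>I. uB i * m i (g k) (h k)) else 0)"
    using finI by (simp add: prod_sum_PiE prod.distrib)
  also have "\<dots> = (if z = v then (\<Prod>k<n. dlt (g k) (h k)) else 0)"
    using g h UL by (auto intro!: prod.cong)
  also have "\<dots> = dlt (g, v) (h, z)"
    by (simp only: prod_dlt[OF g h]) (auto simp: dlt_def)
  finally show "(\<Sum>p\<in>AnB_basis I n. unitAnB I n uB p * AnB_mult I m n p (g, v) (h, z)) = dlt (g, v) (h, z)" .
  have "(\<Sum>p\<in>AnB_basis I n. unitAnB I n uB p * AnB_mult I m n (g, v) p (h, z))
      = (\<Sum>f\<in>{..<n} \<rightarrow>\<^sub>E I. (\<Prod>k<n. uB (f k)) * AnB_mult I m n (g, v) (f, id) (h, z))"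
    by (rule sum_unitAnB[OF finI])
  also have "\<dots> = (\<Sum>f\<in>{..<n} \<rightarrow>\<^sub>E I. if z = v then (\<Prod>k<n. uB (f k)) * (\<Prod>k<n. m (g (inv v k)) (f k) (h (inv v k))) else 0)"
    by (intro sum.cong refl) (simp add: mult_eq pl_id prod_perm_arg[OF v, of "\<lambda>k x. m (g k) x (h k)"])
  also have "\<dots> = (if z = v then (\<Prod>k<n. \<Sum>i\<in>I. uB i * m (g (inv v k)) i (h (inv v k))) else 0)"
    using finI by (simp add: prod_sum_PiE prod.distrib)
  also have "\<dots> = (if z = v then (\<Prod>k<n. dlt (g (inv v k)) (h (inv v k))) else 0)"
  proof (intro if_cong refl prod.cong)
    fix k assume "k \<in> {..<n}"
    then have "inv v k < n" using perm_lt[OF permutes_inv[OF v]] by simp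
    then have "g (inv v k) \<in> I" "h (inv v k) \<in> I" using g h by auto
    then show "(\<Sum>i\<in>I. uB i * m (g (inv v k)) i (h (inv v k))) = dlt (g (inv v k)) (h (inv v k))" by (rule UR)
  qed
  also have "\<dots> = (if z = v then (\<Prod>k<n. dlt (g k) (h k)) else 0)"
    using prod.permute[OF permutes_inv[OF v], of "\<lambda>k. dlt (g k) (h k)"] by (simp add: comp_def)
  also have "\<dots> = dlt (g, v) (h, z)"
    by (simp only: prod_dlt[OF g h]) (auto simp: dlt_def)
  finally show "(\<Sum>p\<in>AnB_basis I n. unitAnB I n uB p * AnB_mult I m n (g, v) p (h, z)) = dlt (g, v) (h, z)" .
qed


lemma AnB_fd:
  assumes fd: "fd_algebra I m"
  shows "fd_algebra (AnB_basis I n) (AnB_mult I m n)"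
proof -
  have finI: "finite I" using fd by (simp add: fd_algebra_def)
  have assocB: "\<forall>x\<in>vecs I. \<forall>y\<in>vecs I. \<forall>z\<in>vecs I. amult I m (amult I m x y) z = amult I m x (amult I m y z)"
    using fd by (simp add: fd_algebra_def)
  obtain uB where uB: "uB \<in> vecs I" "\<forall>x\<in>vecs I. amult I m uB x = x \<and> amult I m x uB = x"
    using fd unfolding fd_algebra_def by blast
  have BA: "\<And>a b c d. a\<in>I \<Longrightarrow> b\<in>I \<Longrightarrow> c\<in>I \<Longrightarrow> d\<in>I \<Longrightarrow>
       (\<Sum>p\<in>I. m a b p * m p c d) = (\<Sum>p\<in>I. m b c p * m a p d)"
    using consts_from_assoc[OF finI assocB] by blast
  have UL: "\<And>j k. j \<in> I \<Longrightarrow> k \<in> I \<Longrightarrow> (\<Sum>i\<in>I. uB i * m i j k) = dlt j k"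
    using unit_consts(1)[OF finI uB(2)] by blast
  have UR: "\<And>j k. j \<in> I \<Longrightarrow> k \<in> I \<Longrightarrow> (\<Sum>i\<in>I. uB i * m j i k) = dlt j k"
    using unit_consts(2)[OF finI uB(2)] by blast
  have C: "(\<Sum>p\<in>AnB_basis I n. AnB_mult I m n a b p * AnB_mult I m n p c d)
         = (\<Sum>p\<in>AnB_basis I n. AnB_mult I m n b c p * AnB_mult I m n a p d)"
    if H: "a \<in> AnB_basis I n" "b \<in> AnB_basis I n" "c \<in> AnB_basis I n" "d \<in> AnB_basis I n" for a b c d
  proof -
    obtain f w where a: "a = (f, w)" "f \<in> {..<n} \<rightarrow>\<^sub>E I" "w permutes {..<n}" using H(1) by (auto simp: AnB_basis_def)
    obtain g v where b: "b = (g, v)" "g \<in> {..<n} \<rightarrow>\<^sub>E I" "v permutes {..<n}" using H(2) by (auto simp: AnB_basis_def)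
    obtain h u where c: "c = (h, u)" "h \<in> {..<n} \<rightarrow>\<^sub>E I" "u permutes {..<n}" using H(3) by (auto simp: AnB_basis_def)
    obtain e z where d: "d = (e, z)" "e \<in> {..<n} \<rightarrow>\<^sub>E I" using H(4) by (auto simp: AnB_basis_def)
    show ?thesis unfolding a b c d
      by (rule AnB_assoc_consts[OF finI BA a(2) b(2) c(2) d(2) a(3) b(3) c(3)])
  qed
  have L: "(\<Sum>i\<in>AnB_basis I n. unitAnB I n uB i * AnB_mult I m n i j k) = dlt j k"
    and R: "(\<Sum>i\<in>AnB_basis I n. unitAnB I n uB i * AnB_mult I m n j i k) = dlt j k"
    if H: "j \<in> AnB_basis I n" "k \<in> AnB_basis I n" for j k
  proof -
    obtain g v where b: "j = (g, v)" "g \<in> {..<n} \<rightarrow>\<^sub>E I" "v permutes {..<n}" using H(1) by (auto simp: AnB_basis_def)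
    obtain h z where c: "k = (h, z)" "h \<in> {..<n} \<rightarrow>\<^sub>E I" using H(2) by (auto simp: AnB_basis_def)
    show "(\<Sum>i\<in>AnB_basis I n. unitAnB I n uB i * AnB_mult I m n i j k) = dlt j k"
      unfolding b c by (rule AnB_unit_consts(1)[OF finI UL UR b(2) c(2) b(3)])
    show "(\<Sum>i\<in>AnB_basis I n. unitAnB I n uB i * AnB_mult I m n j i k) = dlt j k"
      unfolding b c by (rule AnB_unit_consts(2)[OF finI UL UR b(2) c(2) b(3)])
  qed
  have finB: "finite (AnB_basis I n)" by (rule finite_basis[OF finI])
  show ?thesis unfolding fd_algebra_def
  proof (intro conjI ballI bexI)
    show "finite (AnB_basis I n)" by (rule finB)
    show "amult (AnB_basis I n) (AnB_mult I m n) (amult (AnB_basis I n) (AnB_mult I m n) x y) z =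
          amult (AnB_basis I n) (AnB_mult I m n) x (amult (AnB_basis I n) (AnB_mult I m n) y z)" for x y z
      by (rule amult_assoc_consts) (rule C)
    show "unitAnB I n uB \<in> vecs (AnB_basis I n)" by (rule unitAnB_vecs)
    show "amult (AnB_basis I n) (AnB_mult I m n) (unitAnB I n uB) x = x" if "x \<in> vecs (AnB_basis I n)" for x
      by (rule unit_from_consts(1)[OF finB L R that])
    show "amult (AnB_basis I n) (AnB_mult I m n) x (unitAnB I n uB) = x" if "x \<in> vecs (AnB_basis I n)" for x
      by (rule unit_from_consts(2)[OF finB L R that])
  qed
qed



lemma sum_PiE_perm:
  assumes s: "s permutes {..<n}"
  shows "(\<Sum>g\<in>{..<n} \<rightarrow>\<^sub>E I. F (restrict (g \<circ> s) {..<n})) = (\<Sum>g\<in>{..<n} \<rightarrow>\<^sub>E I. (F g :: rat))"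
proof (rule sum.reindex_bij_witness[where j="\<lambda>g. restrict (g \<circ> s) {..<n}" and i="\<lambda>g. restrict (g \<circ> inv s) {..<n}"])
  fix a assume a: "a \<in> {..<n} \<rightarrow>\<^sub>E I"
  show "restrict (restrict (a \<circ> s) {..<n} \<circ> inv s) {..<n} = a"
  proof (rule PiE_ext[OF _ a])
    show "restrict (restrict (a \<circ> s) {..<n} \<circ> inv s) {..<n} \<in> {..<n} \<rightarrow>\<^sub>E I"
      using a perm_lt[OF permutes_inv[OF s]] by (auto simp: permutes_inverses[OF s])
    fix k assume "k \<in> {..<n}"
    then show "restrict (restrict (a \<circ> s) {..<n} \<circ> inv s) {..<n} k = a k"
      using perm_lt[OF permutes_inv[OF s]] permutes_inverses[OF s] by auto
  qed
  show "restrict (a \<circ> s) {..<n} \<in> {..<n} \<rightarrow>\<^sub>E I" using a perm_lt[OF s] by auto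
  show "F (restrict (a \<circ> s) {..<n}) = F (restrict (a \<circ> s) {..<n})" by (rule refl)
next
  fix b assume b: "b \<in> {..<n} \<rightarrow>\<^sub>E I"
  show "restrict (restrict (b \<circ> inv s) {..<n} \<circ> s) {..<n} = b"
  proof (rule PiE_ext[OF _ b])
    show "restrict (restrict (b \<circ> inv s) {..<n} \<circ> s) {..<n} \<in> {..<n} \<rightarrow>\<^sub>E I"
      using b perm_lt[OF s] by (auto simp: permutes_inverses[OF s])
    fix k assume "k \<in> {..<n}"
    then show "restrict (restrict (b \<circ> inv s) {..<n} \<circ> s) {..<n} k = b k"
      using perm_lt[OF s] permutes_inverses[OF s] by auto
  qed
  show "restrict (b \<circ> inv s) {..<n} \<in> {..<n} \<rightarrow>\<^sub>E I" using b perm_lt[OF permutes_inv[OF s]] by auto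
qed

lemma sum_if_mult: "(\<Sum>h\<in>A. (if P then X h else 0) * Y h) = (if P then (\<Sum>h\<in>A. X h * Y h) else (0::rat))"
  by (cases P) simp_all

definition traceAnB :: "nat \<Rightarrow> ('i \<Rightarrow> rat) \<Rightarrow> (nat \<Rightarrow> 'i) \<times> (nat \<Rightarrow> nat) \<Rightarrow> rat" where
  "traceAnB n t q = (if snd q = w0 n then (\<Prod>k<n. t (fst q k)) else 0)"

lemma Phi_eq:
  assumes finI: "finite I" and f: "f \<in> {..<n} \<rightarrow>\<^sub>E I" and g: "g \<in> {..<n} \<rightarrow>\<^sub>E I"
  shows "(\<Sum>q\<in>AnB_basis I n. AnB_mult I m n (f, w') (g, s) q * traceAnB n t q)
     = (if w0 n = s \<circ> w' \<and> perm_length n (w0 n) = perm_length n s + perm_length n w'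
        then (\<Prod>k<n. \<Sum>i\<in>I. m (f k) (g (w' k)) i * t i) else 0)"
proof -
  have w0S: "w0 n \<in> {w. w permutes {..<n}}" using w0_permutes by simp
  have finS: "finite {w. w permutes {..<n}}" by (rule finite_permutations) simp
  have "(\<Sum>q\<in>AnB_basis I n. AnB_mult I m n (f, w') (g, s) q * traceAnB n t q)
     = (\<Sum>h\<in>{..<n} \<rightarrow>\<^sub>E I. \<Sum>u\<in>{w. w permutes {..<n}}. AnB_mult I m n (f, w') (g, s) (h, u) * (if u = w0 n \<and> True then (\<Prod>k<n. t (h k)) else 0))"
    unfolding sum_basis traceAnB_def fst_conv snd_conv by simp
  also have "\<dots> = (\<Sum>h\<in>{..<n} \<rightarrow>\<^sub>E I. AnB_mult I m n (f, w') (g, s) (h, w0 n) * (\<Prod>k<n. t (h k)))"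
    by (intro sum.cong refl, subst sum_delta_cond2[OF finS w0S]) simp
  also have "\<dots> = (if w0 n = s \<circ> w' \<and> perm_length n (w0 n) = perm_length n s + perm_length n w'
        then (\<Sum>h\<in>{..<n} \<rightarrow>\<^sub>E I. (\<Prod>k<n. m (f k) (g (w' k)) (h k)) * (\<Prod>k<n. t (h k))) else 0)"
    by (simp only: mult_eq sum_if_mult)
  also have "(\<Sum>h\<in>{..<n} \<rightarrow>\<^sub>E I. (\<Prod>k<n. m (f k) (g (w' k)) (h k)) * (\<Prod>k<n. t (h k)))
      = (\<Prod>k<n. \<Sum>i\<in>I. m (f k) (g (w' k)) i * t i)"
    using finI by (simp add: prod_sum_PiE prod.distrib)
  finally show ?thesis .
qed


lemma AnB_frob_form:
  assumes fr: "frobenius I m"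
  shows "\<exists>T. \<forall>y\<in>vecs (AnB_basis I n). y \<noteq> (\<lambda>_. 0) \<longrightarrow>
     (\<exists>y'\<in>vecs (AnB_basis I n). (\<Sum>k\<in>AnB_basis I n. amult (AnB_basis I n) (AnB_mult I m n) y y' k * T k) \<noteq> 0)"
proof -
  have finI: "finite I" using fr by (simp add: frobenius_def fd_algebra_def)
  obtain t where tB: "\<forall>y\<in>vecs I. y \<noteq> (\<lambda>_. 0) \<longrightarrow> (\<exists>y'\<in>vecs I. (\<Sum>k\<in>I. amult I m y y' k * t k) \<noteq> 0)"
    using fr unfolding frobenius_def by blast
  define beta where "beta i j = (\<Sum>k\<in>I. m i j k * t k)" for i j
  have nd: "\<exists>b\<in>vecs I. (\<Sum>i\<in>I. \<Sum>j\<in>I. a i * b j * beta i j) \<noteq> 0"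
    if H: "a \<in> vecs I" "a \<noteq> (\<lambda>_. 0)" for a
  proof -
    obtain b where "b \<in> vecs I" "(\<Sum>k\<in>I. amult I m a b k * t k) \<noteq> 0" using tB H by blast
    then show ?thesis unfolding trace_form beta_def by blast
  qed
  let ?B = "AnB_basis I n"
  let ?M = "AnB_mult I m n"
  let ?P = "{..<n} \<rightarrow>\<^sub>E I"
  let ?S = "{w. w permutes {..<n}}"
  have finS: "finite ?S" by (rule finite_permutations) simp
  show ?thesis
  proof (intro exI[of _ "traceAnB n t"] ballI impI)
    fix y assume yv: "y \<in> vecs ?B" and yne: "y \<noteq> (\<lambda>_. 0)"
    obtain p0 where yp0: "y p0 \<noteq> 0" using yne by (meson ext)
    then have "p0 \<in> ?B" using yv unfolding vecs_def by blast
    then obtain f0 w where p0: "p0 = (f0, w)" "f0 \<in> ?P" and w: "w permutes {..<n}" by (auto simp: AnB_basis_def)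
    define Y where "Y f = y (f, w)" for f
    have "Y f0 \<noteq> 0" using yp0 p0 by (simp add: Y_def)
    then obtain C where C: "(\<Sum>f\<in>?P. \<Sum>g\<in>?P. Y f * C g * (\<Prod>k\<in>{..<n}. beta (f k) (g k))) \<noteq> 0"
      using tensor_nondeg[OF finI nd finite_lessThan p0(2)] by blast
    define v where "v = w0 n \<circ> inv w"
    have vS: "v permutes {..<n}" unfolding v_def by (rule permutes_compose[OF permutes_inv[OF w] w0_permutes])
    define c where "c g = C (restrict (g \<circ> w) {..<n})" for g
    define y' where "y' q = (if q \<in> ?B \<and> snd q = v then c (fst q) else 0)" for q
    have y'v: "y' \<in> vecs ?B" by (auto simp: vecs_def y'_def)
    have vw: "v \<circ> w = w0 n" by (simp add: v_def o_assoc[symmetric] permutes_inv_o(2)[OF w])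
    have vw_iff: "(w0 n = v \<circ> w') \<longleftrightarrow> w' = w" for w'
    proof
      assume "w0 n = v \<circ> w'"
      then have "v \<circ> w' = v \<circ> w" using vw by simp
      then show "w' = w" by (auto simp: fun_eq_iff perm_eq_iff[OF vS])
    qed (simp add: vw)
    have Lcond: "perm_length n (w0 n) = perm_length n v + perm_length n w"
      using pl_w0[of n] pl_w0_comp[OF permutes_inv[OF w]] pl_inv[OF w] unfolding v_def by simp
    have Phi: "(\<Sum>q\<in>?B. ?M (f, w') (g, v) q * traceAnB n t q) = (if w' = w then (\<Prod>k<n. beta (f k) (g (w k))) else 0)"
      if "f \<in> ?P" "g \<in> ?P" for f g w'
      using Phi_eq[OF finI that, where w'=w' and s=v and m=m and t=t] vw_iff[of w'] Lcond by (auto simp: beta_def)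
    have vS': "v \<in> ?S" using vS by simp
    have wS: "w \<in> ?S" using w by simp
    have "(\<Sum>q\<in>?B. amult ?B ?M y y' q * traceAnB n t q)
        = (\<Sum>a\<in>?B. \<Sum>b\<in>?B. y a * y' b * (\<Sum>q\<in>?B. ?M a b q * traceAnB n t q))"
      by (rule trace_form)
    also have "\<dots> = (\<Sum>f\<in>?P. \<Sum>w'\<in>?S. \<Sum>b\<in>?B. y (f, w') * y' b * (\<Sum>q\<in>?B. ?M (f, w') b q * traceAnB n t q))"
      by (rule sum_basis)
    also have "\<dots> = (\<Sum>f\<in>?P. \<Sum>w'\<in>?S. \<Sum>g\<in>?P. y (f, w') * c g * (if w' = w then (\<Prod>k<n. beta (f k) (g (w k))) else 0))"
    proof (intro sum.cong refl)
      fix f w' assume f: "f \<in> ?P" and w': "w' \<in> ?S"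
      have "(\<Sum>b\<in>?B. y (f, w') * y' b * (\<Sum>q\<in>?B. ?M (f, w') b q * traceAnB n t q))
          = (\<Sum>g\<in>?P. \<Sum>s\<in>?S. y (f, w') * y' (g, s) * (\<Sum>q\<in>?B. ?M (f, w') (g, s) q * traceAnB n t q))"
        by (rule sum_basis)
      also have "\<dots> = (\<Sum>g\<in>?P. \<Sum>s\<in>?S. (if s = v \<and> True then y (f, w') * c g else 0) * (\<Sum>q\<in>?B. ?M (f, w') (g, s) q * traceAnB n t q))"
        by (intro sum.cong refl) (auto simp: y'_def AnB_basis_def)
      also have "\<dots> = (\<Sum>g\<in>?P. y (f, w') * c g * (\<Sum>q\<in>?B. ?M (f, w') (g, v) q * traceAnB n t q))"
        by (intro sum.cong refl, subst sum_delta_cond[OF finS vS']) simp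
      also have "\<dots> = (\<Sum>g\<in>?P. y (f, w') * c g * (if w' = w then (\<Prod>k<n. beta (f k) (g (w k))) else 0))"
        by (intro sum.cong refl) (simp only: Phi[OF f])
      finally show "(\<Sum>b\<in>?B. y (f, w') * y' b * (\<Sum>q\<in>?B. ?M (f, w') b q * traceAnB n t q))
          = (\<Sum>g\<in>?P. y (f, w') * c g * (if w' = w then (\<Prod>k<n. beta (f k) (g (w k))) else 0))" .
    qed
    also have "\<dots> = (\<Sum>f\<in>?P. \<Sum>g\<in>?P. Y f * c g * (\<Prod>k<n. beta (f k) (g (w k))))"
    proof (intro sum.cong refl)
      fix f assume f: "f \<in> ?P"
      have "(\<Sum>w'\<in>?S. \<Sum>g\<in>?P. y (f, w') * c g * (if w' = w then (\<Prod>k<n. beta (f k) (g (w k))) else 0))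
          = (\<Sum>w'\<in>?S. if w' = w then (\<Sum>g\<in>?P. Y f * c g * (\<Prod>k<n. beta (f k) (g (w k)))) else 0)"
        by (intro sum.cong refl) (simp add: Y_def)
      also have "\<dots> = (\<Sum>g\<in>?P. Y f * c g * (\<Prod>k<n. beta (f k) (g (w k))))"
        using finS wS by simp
      finally show "(\<Sum>w'\<in>?S. \<Sum>g\<in>?P. y (f, w') * c g * (if w' = w then (\<Prod>k<n. beta (f k) (g (w k))) else 0))
          = (\<Sum>g\<in>?P. Y f * c g * (\<Prod>k<n. beta (f k) (g (w k))))" .
    qed
    also have "\<dots> = (\<Sum>f\<in>?P. \<Sum>g\<in>?P. Y f * C g * (\<Prod>k\<in>{..<n}. beta (f k) (g k)))"
    proof (rule sum.cong[OF refl])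
      fix f assume f: "f \<in> ?P"
      have "(\<Sum>g\<in>?P. Y f * c g * (\<Prod>k<n. beta (f k) (g (w k))))
          = (\<Sum>g\<in>?P. (\<lambda>g'. Y f * C g' * (\<Prod>k\<in>{..<n}. beta (f k) (g' k))) (restrict (g \<circ> w) {..<n}))"
        by (intro sum.cong refl) (auto simp: c_def intro!: prod.cong)
      also have "\<dots> = (\<Sum>g\<in>?P. Y f * C g * (\<Prod>k\<in>{..<n}. beta (f k) (g k)))"
        by (rule sum_PiE_perm[OF w])
      finally show "(\<Sum>g\<in>?P. Y f * c g * (\<Prod>k<n. beta (f k) (g (w k))))
          = (\<Sum>g\<in>?P. Y f * C g * (\<Prod>k\<in>{..<n}. beta (f k) (g k)))" .
    qed
    finally have "(\<Sum>q\<in>?B. amult ?B ?M y y' q * traceAnB n t q) \<noteq> 0" using C by simp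
    then show "\<exists>y'\<in>vecs ?B. (\<Sum>q\<in>?B. amult ?B ?M y y' q * traceAnB n t q) \<noteq> 0"
      using y'v by blast
  qed
qed


theorem mainTheorem17:
  fixes I :: "'i set" and m :: "'i \<Rightarrow> 'i \<Rightarrow> 'i \<Rightarrow> rat" and n :: nat
  assumes "frobenius I m"
  shows "frobenius (AnB_basis I n) (AnB_mult I m n)"
proof -
  have fd: "fd_algebra I m" using assms by (simp add: frobenius_def)
  show ?thesis unfolding frobenius_def
    using AnB_fd[OF fd, of n] AnB_frob_form[OF assms, of n] by blast
qed

end
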